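(* Let $\mu_{[\cdot,\cdot]}\in(\mathbb{C}^{2\times2})^*\otimes(\mathbb{C}^{2\times2})^*\otimes\mathbb{C}^{2\times2}$ be the structure tensor of the commutator map $\mathbb{C}^{2\times2}\times\mathbb{C}^{2\times2}\to\mathbb{C}^{2\times2}$, $(A,X)\mapsto AX-XA$. Then $\operatorname{rank}(\mu_{[\cdot,\cdot]})\in\{5,6\}$ and $\underline{\operatorname{rank}}(\mu_{[\cdot,\cdot]})=5$.
   Context: Structure tensor of a bilinear map $\beta:U\times V\to W$: the unique $\mu_\beta\in U^*\otimes V^*\otimes W$ with $\beta(u,v)=\mu_\beta(u,v,\cdot)$. Rank: least number of decomposable tensors summing to the tensor; border rank: least $r$ such that it is a limit of tensors of rank at most $r$. *)

theory Defs
  imports "HOL-Analysis.Analysis"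
begin

text \<open>Tensors in U* (x) V* (x) W with finite index types (coordinates w.r.t. bases),
  represented as coefficient functions.\<close>

definition tensor_rank :: "('a \<Rightarrow> 'b \<Rightarrow> 'c \<Rightarrow> complex) \<Rightarrow> nat" where
  "tensor_rank T = (LEAST r. \<exists>(a :: nat \<Rightarrow> 'a \<Rightarrow> complex) (b :: nat \<Rightarrow> 'b \<Rightarrow> complex)
        (c :: nat \<Rightarrow> 'c \<Rightarrow> complex). T = (\<lambda>x y z. \<Sum>l<r. a l x * b l y * c l z))"

text \<open>Border rank: least r such that T is a limit (product topology = Euclidean topology
  on the finite-dimensional coefficient space) of tensors of rank at most r.\<close>
definition border_rank :: "('a \<Rightarrow> 'b \<Rightarrow> 'c \<Rightarrow> complex) \<Rightarrow> nat" where
  "border_rank T = (LEAST r. \<exists>S :: nat \<Rightarrow> ('a \<Rightarrow> 'b \<Rightarrow> 'c \<Rightarrow> complex).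
        (\<forall>n. tensor_rank (S n) \<le> r) \<and> (S \<longlonglongrightarrow> T))"

definition mat_unit :: "2 \<times> 2 \<Rightarrow> complex^2^2" where
  "mat_unit p = (\<chi> i j. if i = fst p \<and> j = snd p then 1 else 0)"

definition struct_tensor :: "(complex^2^2 \<Rightarrow> complex^2^2 \<Rightarrow> complex^2^2)
      \<Rightarrow> (2 \<times> 2) \<Rightarrow> (2 \<times> 2) \<Rightarrow> (2 \<times> 2) \<Rightarrow> complex" where
  "struct_tensor \<beta> = (\<lambda>x y z. \<beta> (mat_unit x) (mat_unit y) $ fst z $ snd z)"

definition commutator :: "complex^2^2 \<Rightarrow> complex^2^2 \<Rightarrow> complex^2^2" where
  "commutator A X = A ** X - X ** A"

end

theory Submission
  imports Defs
begin

type_synonym idx = "2 \<times> 2"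
type_synonym ten = "idx \<Rightarrow> idx \<Rightarrow> idx \<Rightarrow> complex"

lemma unit_mult: "mat_unit (a,b) ** mat_unit (c,d) = (if b = c then mat_unit (a,d) else 0)"
proof -
  have e: "\<And>i j k. (if i = a \<and> k = b then 1 else 0) * (if k = c \<and> j = d then 1 else 0)
     = (if k = b then (if i = a \<and> b = c \<and> j = d then 1 else 0) else (0::complex))"
    by auto
  show ?thesis
    unfolding matrix_matrix_mult_def mat_unit_def vec_eq_iff
    by (simp only: vec_lambda_beta fst_conv snd_conv e sum.delta' finite UNIV_I if_True)
       (auto simp: vec_eq_iff)
qed

lemma comm_unit:
  "commutator (mat_unit (a,b)) (mat_unit (c,d)) $ i $ j =
   (if a = i \<and> b = c \<and> d = j then 1 else 0) - (if c = i \<and> d = a \<and> b = j then 1 else 0)"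
proof -
  have u: "\<And>p q. mat_unit (p,q) $ i $ j = (if p = i \<and> q = j then 1 else 0)"
    by (simp add: mat_unit_def eq_commute)
  have "commutator (mat_unit (a,b)) (mat_unit (c,d)) $ i $ j =
     (if b = c then mat_unit (a,d) $ i $ j else 0) - (if d = a then mat_unit (c,b) $ i $ j else 0)"
    unfolding commutator_def unit_mult by simp
  then show ?thesis unfolding u by auto
qed

definition hh :: "idx \<Rightarrow> complex" where
  "hh x = (if x = (1,1) then 1 else if x = (2,2) then -1 else 0)"
definition ee :: "idx \<Rightarrow> complex" where "ee x = (if x = (1,2) then 1 else 0)"
definition ff :: "idx \<Rightarrow> complex" where "ff x = (if x = (2,1) then 1 else 0)"

definition T0 :: ten where "T0 = struct_tensor commutator"

lemma T0_pt: "\<forall>a b c d i j :: 2. T0 (a,b) (c,d) (i,j) = hh (a,b)*ee (c,d)*ee (i,j) - hh (a,b)*ff (c,d)*ff (i,j) - ee (a,b)*hh (c,d)*ee (i,j)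
   + ee (a,b)*ff (c,d)*hh (i,j) + ff (a,b)*hh (c,d)*ff (i,j) - ff (a,b)*ee (c,d)*hh (i,j)"
  unfolding T0_def struct_tensor_def fst_conv snd_conv comm_unit hh_def ee_def ff_def
  by (simp only: forall_2) simp

lemma T0_eq: "T0 = (\<lambda>x y z. hh x*ee y*ee z - hh x*ff y*ff z - ee x*hh y*ee z
   + ee x*ff y*hh z + ff x*hh y*ff z - ff x*ee y*hh z)"
  using T0_pt by (intro ext) (metis surj_pair)


lemma rank_le:
  fixes T :: "'a \<Rightarrow> 'b \<Rightarrow> 'c \<Rightarrow> complex"
  assumes "T = (\<lambda>x y z. \<Sum>l<r. a l x * b l y * c l z)"
  shows "tensor_rank T \<le> r"
  unfolding tensor_rank_def by (rule Least_le) (use assms in blast)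

lemma rank6: "tensor_rank T0 \<le> 6"
proof (rule rank_le)
  show "T0 = (\<lambda>x y z. \<Sum>l<6. ([hh, \<lambda>x. - hh x, \<lambda>x. - ee x, ee, ff, \<lambda>x. - ff x] ! l) x
     * ([ee, ff, hh, ff, hh, ee] ! l) y * ([ee, ff, ee, hh, ff, hh] ! l) z)"
    unfolding T0_eq by (intro ext) (simp add: eval_nat_numeral algebra_simps)
qed

definition DD :: ten where "DD = (\<lambda>x y z. ee x*ff y*ee z - ff x*ee y*ff z)"

lemma id5:
  fixes t h1 e1 f1 h2 e2 f2 h3 e3 f3 :: complex
  assumes "t \<noteq> 0"
  shows "h1*e2*e3 - h1*f2*f3 - e1*h2*e3 + e1*f2*h3 + f1*h2*f3 - f1*e2*h3 + t*(e1*f2*e3 - f1*e2*f3)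
   = f1/t * (h2 - t*e2) * (h3 + t*f3) + (-e1/t) * (h2 - t*f2) * (h3 + t*e3) + (e1 - f1)/t * h2 * h3
     + h1 * e2 * e3 + (- h1) * f2 * f3"
  using assms by (simp add: field_simps)

lemma rank5:
  assumes "t \<noteq> 0"
  shows "tensor_rank (\<lambda>x y z. T0 x y z + t * DD x y z) \<le> 5"
proof (rule rank_le)
  show "(\<lambda>x y z. T0 x y z + t * DD x y z) = (\<lambda>x y z. \<Sum>l<5.
      ([\<lambda>x. ff x / t, \<lambda>x. - ee x / t, \<lambda>x. (ee x - ff x)/t, hh, \<lambda>x. - hh x] ! l) x
    * ([\<lambda>y. hh y - t*ee y, \<lambda>y. hh y - t*ff y, hh, ee, ff] ! l) y
    * ([\<lambda>z. hh z + t*ff z, \<lambda>z. hh z + t*ee z, hh, ee, ff] ! l) z)"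
    unfolding T0_eq DD_def using assms
    by (intro ext) (simp add: eval_nat_numeral id5[OF assms])
qed

definition SS :: "nat \<Rightarrow> ten" where
  "SS n = (\<lambda>x y z. T0 x y z + (1 / of_nat (Suc n)) * DD x y z)"

lemma SS_rank: "tensor_rank (SS n) \<le> 5"
proof -
  have "of_nat (Suc n) \<noteq> (0::complex)" by (simp only: of_nat_eq_0_iff)
  then show ?thesis unfolding SS_def by (intro rank5) simp
qed

lemma SS_lim: "SS \<longlonglongrightarrow> T0"
proof -
  define \<Phi> :: "complex \<Rightarrow> ten" where "\<Phi> t = (\<lambda>x y z. T0 x y z + t * DD x y z)" for t
  have c: "continuous_on UNIV \<Phi>"
    unfolding \<Phi>_def by (intro continuous_on_coordinatewise_then_product continuous_intros)
  have l: "(\<lambda>n. 1 / of_nat (Suc n) :: complex) \<longlonglongrightarrow> 0"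
    using LIMSEQ_Suc[OF lim_1_over_n] by simp
  have "(\<lambda>n. \<Phi> (1 / of_nat (Suc n))) \<longlonglongrightarrow> \<Phi> 0"
    using continuous_on_tendsto_compose[OF c l] by (simp add: o_def)
  moreover have "\<Phi> 0 = T0" unfolding \<Phi>_def by simp
  ultimately show ?thesis unfolding SS_def \<Phi>_def by simp
qed


section \<open>Lower bound via Koszul flattening\<close>

definition outer :: "complex^'n \<Rightarrow> complex^'n \<Rightarrow> complex^'n^'n" where
  "outer u w = (\<chi> i j. u$i * w$j)"

lemma det_low:
  fixes u w :: "'k \<Rightarrow> complex^'n"
  assumes K: "finite K" "card K < CARD('n)"
  shows "det (\<Sum>k\<in>K. outer (u k) (w k)) = 0"
proof -
  obtain f :: "'k \<Rightarrow> 'n" where f: "inj_on f K"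
    using card_le_inj[of K "UNIV :: 'n set"] K by auto
  have "card (f ` K) < CARD('n)" using K f by (simp add: card_image)
  then have "f ` K \<noteq> UNIV" by auto
  then obtain j0 where j0: "j0 \<notin> f ` K" by auto
  define g where "g = inv_into K f"
  define X :: "complex^'n^'n" where "X = (\<chi> i j. if j \<in> f ` K then u (g j) $ i else 0)"
  define Y :: "complex^'n^'n" where "Y = (\<chi> j c. if j \<in> f ` K then w (g j) $ c else 0)"
  have "(\<Sum>k\<in>K. outer (u k) (w k)) = X ** Y"
  proof (rule vec_eq_iff[THEN iffD2], intro allI, rule vec_eq_iff[THEN iffD2], intro allI)
    fix i c
    have "(X ** Y) $ i $ c = (\<Sum>j\<in>UNIV. if j \<in> f ` K then u (g j) $ i * w (g j) $ c else 0)"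
      unfolding matrix_matrix_mult_def X_def Y_def by (simp add: if_distrib cong: if_cong)
    also have "\<dots> = (\<Sum>j\<in>f ` K. u (g j) $ i * w (g j) $ c)"
      by (simp add: sum.If_cases)
    also have "\<dots> = (\<Sum>k\<in>K. u (g (f k)) $ i * w (g (f k)) $ c)"
      by (rule sum.reindex[OF f, unfolded o_def])
    also have "\<dots> = (\<Sum>k\<in>K. u k $ i * w k $ c)"
      unfolding g_def using f by (intro sum.cong) auto
    finally show "(\<Sum>k\<in>K. outer (u k) (w k)) $ i $ c = (X ** Y) $ i $ c"
      by (simp add: outer_def)
  qed
  moreover have "det X = 0"
  proof (rule det_zero_column(2))
    show "column j0 X = 0" using j0 by (simp add: column_def X_def vec_eq_iff)
  qed
  ultimately show ?thesis by (simp add: det_mul)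
qed


lemma ex_dec:
  fixes T :: "'a::finite \<Rightarrow> 'b::finite \<Rightarrow> 'c::finite \<Rightarrow> complex"
  shows "\<exists>(r::nat) a b c. T = (\<lambda>x y z. \<Sum>l<r. a l x * b l y * c l z)"
proof -
  obtain h where h: "bij_betw h {0..<card (UNIV :: ('a\<times>'b\<times>'c) set)} (UNIV :: ('a\<times>'b\<times>'c) set)"
    using ex_bij_betw_nat_finite[of "UNIV :: ('a\<times>'b\<times>'c) set"] by auto
  define N where "N = card (UNIV :: ('a\<times>'b\<times>'c) set)"
  define a where "a l x = (if x = fst (h l) then T (fst (h l)) (fst (snd (h l))) (snd (snd (h l))) else 0)" for l x
  define b where "b l y = (if y = fst (snd (h l)) then 1 else (0::complex))" for l y
  define c where "c l z = (if z = snd (snd (h l)) then 1 else (0::complex))" for l z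
  have hT: "T = (\<lambda>x y z. \<Sum>l<N. a l x * b l y * c l z)"
  proof (intro ext)
    fix x y z
    have "(\<Sum>l<N. a l x * b l y * c l z) = (\<Sum>l\<in>{0..<N}. (\<lambda>p. if p = (x,y,z) then T x y z else 0) (h l))"
      unfolding a_def b_def c_def lessThan_atLeast0 by (intro sum.cong) (auto simp: prod_eq_iff)
    also have "\<dots> = (\<Sum>p\<in>UNIV. if p = (x,y,z) then T x y z else 0)"
      using sum.reindex_bij_betw[OF h[folded N_def], of "\<lambda>p. if p = (x,y,z) then T x y z else 0"] by simp
    also have "\<dots> = T x y z" by simp
    finally show "T x y z = (\<Sum>l<N. a l x * b l y * c l z)" by simp
  qed
  show ?thesis using hT by blast
qed

lemma rank_dec:
  fixes T :: "'a::finite \<Rightarrow> 'b::finite \<Rightarrow> 'c::finite \<Rightarrow> complex"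
  shows "\<exists>a b c. T = (\<lambda>x y z. \<Sum>l<tensor_rank T. a l x * b l y * c l z)"
  unfolding tensor_rank_def using ex_dec[of T] by (rule LeastI_ex)

definition eps :: "3 \<Rightarrow> 3 \<Rightarrow> 3 \<Rightarrow> complex" where
  "eps i j k = (if (i,j,k) = (1,2,3) \<or> (i,j,k) = (2,3,1) \<or> (i,j,k) = (3,1,2) then 1
     else if (i,j,k) = (1,3,2) \<or> (i,j,k) = (3,2,1) \<or> (i,j,k) = (2,1,3) then -1 else 0)"

definition io :: "3 \<Rightarrow> idx" where "io i = (if i = 1 then (1,1) else if i = 2 then (1,2) else (2,1))"
definition io' :: "3 \<Rightarrow> idx" where "io' i = (if i = 1 then (1,1) else if i = 2 then (2,1) else (1,2))"

definition Kz :: "ten \<Rightarrow> complex^(3\<times>3)^(3\<times>3)" where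
  "Kz T = (\<chi> r c. \<Sum>x\<in>UNIV. eps x (fst c) (fst r) * T (io x) (io (snd c)) (io' (snd r)))"

lemma Kz_sum:
  assumes "finite L"
  shows "Kz (\<lambda>x y z. \<Sum>l\<in>L. G l x y z) = (\<Sum>l\<in>L. Kz (G l))"
  unfolding Kz_def
  apply (simp add: vec_eq_iff sum_distrib_left sum_component)
  apply (intro allI)
  apply (rule sum.swap)
  done

lemma cross2:
  fixes \<alpha> :: "3 \<Rightarrow> complex"
  shows "\<exists>X Y :: nat \<Rightarrow> 3 \<Rightarrow> complex. \<forall>s p. (\<Sum>x\<in>UNIV. eps x p s * \<alpha> x) = (\<Sum>i<(2::nat). X i s * Y i p)"
proof -
  define R where "R s p = (\<Sum>x\<in>UNIV. eps x p s * \<alpha> x)" for s p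
  have R: "\<forall>s p. R s p = (\<Sum>x\<in>UNIV. eps x p s * \<alpha> x)" by (simp add: R_def)
  show ?thesis
  proof (cases "\<alpha> 1 \<noteq> 0")
    case True
    define X where "X i s = (if i = 0 then (if s = 2 then 1 else if s = 1 then - \<alpha> 2 / \<alpha> 1 else 0)
        else (if s = 3 then 1 else if s = 1 then - \<alpha> 3 / \<alpha> 1 else 0))" for i :: nat and s :: 3
    define Y where "Y i p = (if i = 0 then R 2 p else R 3 p)" for i :: nat and p
    have "\<forall>s p. R s p = (\<Sum>i<(2::nat). X i s * Y i p)"
      unfolding X_def Y_def R_def using True
      by (simp add: forall_3 sum_3 eval_nat_numeral eps_def field_simps)
    then show ?thesis using R by metis
  next
    case F1: False
    show ?thesis
    proof (cases "\<alpha> 2 \<noteq> 0")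
      case True
      define X where "X i s = (if i = 0 then (if s = 1 then 1 else if s = 2 then - \<alpha> 1 / \<alpha> 2 else 0)
          else (if s = 3 then 1 else if s = 2 then - \<alpha> 3 / \<alpha> 2 else 0))" for i :: nat and s :: 3
      define Y where "Y i p = (if i = 0 then R 1 p else R 3 p)" for i :: nat and p
      have "\<forall>s p. R s p = (\<Sum>i<(2::nat). X i s * Y i p)"
        unfolding X_def Y_def R_def using True
        by (simp add: forall_3 sum_3 eval_nat_numeral eps_def field_simps)
      then show ?thesis using R by metis
    next
      case F2: False
      define X where "X i s = (if i = 0 then (if s = 1 then 1 else 0)
          else (if s = 2 then 1 else (0::complex)))" for i :: nat and s :: 3
      define Y where "Y i p = (if i = 0 then R 1 p else R 2 p)" for i :: nat and p
      have "\<forall>s p. R s p = (\<Sum>i<(2::nat). X i s * Y i p)"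
        unfolding X_def Y_def R_def using F1 F2
        by (simp add: forall_3 sum_3 eval_nat_numeral eps_def)
      then show ?thesis using R by metis
    qed
  qed
qed


lemma Kz_rank1:
  "\<exists>U W :: nat \<Rightarrow> complex^(3\<times>3). Kz (\<lambda>x y z. a x * b y * c z) = (\<Sum>i<(2::nat). outer (U i) (W i))"
proof -
  obtain X Y :: "nat \<Rightarrow> 3 \<Rightarrow> complex" where XY:
    "\<forall>s p. (\<Sum>x\<in>UNIV. eps x p s * a (io x)) = (\<Sum>i<(2::nat). X i s * Y i p)"
    using cross2[of "\<lambda>x. a (io x)"] by blast
  define U :: "nat \<Rightarrow> complex^(3\<times>3)" where "U i = (\<chi> r. X i (fst r) * c (io' (snd r)))" for i
  define W :: "nat \<Rightarrow> complex^(3\<times>3)" where "W i = (\<chi> r. Y i (fst r) * b (io (snd r)))" for i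
  have "Kz (\<lambda>x y z. a x * b y * c z) = (\<Sum>i<(2::nat). outer (U i) (W i))"
  proof (rule vec_eq_iff[THEN iffD2], intro allI, rule vec_eq_iff[THEN iffD2], intro allI)
    fix r col :: "3 \<times> 3"
    have "Kz (\<lambda>x y z. a x * b y * c z) $ r $ col
       = (\<Sum>x\<in>UNIV. eps x (fst col) (fst r) * a (io x)) * b (io (snd col)) * c (io' (snd r))"
      unfolding Kz_def by (simp add: sum_distrib_left sum_distrib_right mult_ac)
    also have "\<dots> = (\<Sum>i<(2::nat). X i (fst r) * Y i (fst col)) * b (io (snd col)) * c (io' (snd r))"
      using XY by simp
    also have "\<dots> = (\<Sum>i<(2::nat). outer (U i) (W i)) $ r $ col"
      unfolding U_def W_def outer_def by (simp add: sum_distrib_left sum_distrib_right mult_ac)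
    finally show "Kz (\<lambda>x y z. a x * b y * c z) $ r $ col = (\<Sum>i<(2::nat). outer (U i) (W i)) $ r $ col" .
  qed
  then show ?thesis by blast
qed

lemma low_det:
  assumes "tensor_rank T \<le> 4"
  shows "det (Kz T) = 0"
proof -
  define r where "r = tensor_rank T"
  obtain a b c where T: "T = (\<lambda>x y z. \<Sum>l<r. a l x * b l y * c l z)"
    using rank_dec[of T] unfolding r_def by blast
  have ex: "\<forall>l. \<exists>UW :: (nat \<Rightarrow> complex^(3\<times>3)) \<times> (nat \<Rightarrow> complex^(3\<times>3)).
     Kz (\<lambda>x y z. a l x * b l y * c l z) = (\<Sum>i<(2::nat). outer (fst UW i) (snd UW i))"
  proof
    fix l
    obtain U W where "Kz (\<lambda>x y z. a l x * b l y * c l z) = (\<Sum>i<(2::nat). outer (U i) (W i))"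
      using Kz_rank1[of "a l" "b l" "c l"] by blast
    then show "\<exists>UW :: (nat \<Rightarrow> complex^(3\<times>3)) \<times> (nat \<Rightarrow> complex^(3\<times>3)).
     Kz (\<lambda>x y z. a l x * b l y * c l z) = (\<Sum>i<(2::nat). outer (fst UW i) (snd UW i))"
      by (intro exI[of _ "(U,W)"]) simp
  qed
  obtain UW where UW0: "\<forall>l. Kz (\<lambda>x y z. a l x * b l y * c l z) = (\<Sum>i<(2::nat). outer (fst (UW l) i) (snd (UW l) i))"
    using choice[OF ex] by blast
  have UW: "\<And>l. Kz (\<lambda>x y z. a l x * b l y * c l z) = (\<Sum>i<(2::nat). outer (fst (UW l) i) (snd (UW l) i))"
    using UW0 by blast
  have "Kz T = (\<Sum>l<r. Kz (\<lambda>x y z. a l x * b l y * c l z))"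
    unfolding T by (rule Kz_sum) simp
  also have "\<dots> = (\<Sum>l<r. \<Sum>i<(2::nat). outer (fst (UW l) i) (snd (UW l) i))"
    using UW by simp
  also have "\<dots> = (\<Sum>k\<in>{..<r} \<times> {..<2}. outer (fst (UW (fst k)) (snd k)) (snd (UW (fst k)) (snd k)))"
    by (simp add: sum.cartesian_product split_def)
  finally have eq: "Kz T = \<dots>" .
  have "card ({..<r} \<times> {..<2::nat}) < CARD(3\<times>3)"
    using assms unfolding r_def by (simp add: card_cartesian_product)
  then show ?thesis unfolding eq by (intro det_low) auto
qed


lemma T0_io: "\<forall>i j k. T0 (io i) (io j) (io' k) = eps i j k"
  unfolding T0_eq io_def io'_def hh_def ee_def ff_def eps_def
  by (simp only: forall_3) simp

definition GG :: "complex^(3\<times>3)^(3\<times>3)" where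
  "GG = (\<chi> r c. (if fst c = snd c \<and> fst r = snd r then 1 else 0) - (if fst c = snd r \<and> fst r = snd c then 1 else 0))"
definition GI :: "complex^(3\<times>3)^(3\<times>3)" where
  "GI = (\<chi> c r. (if fst c = snd c \<and> fst r = snd r then 1/2 else 0) - (if snd c = fst r \<and> fst c = snd r then 1 else 0))"

lemma Kz_T0: "Kz T0 = GG"
proof -
  have "\<forall>s z p q. (\<Sum>x\<in>UNIV. eps x p s * eps x q z) =
     (if p = q \<and> s = z then 1 else 0) - (if p = z \<and> s = q then 1 else 0)"
    by (simp only: forall_3 sum_3) (simp add: eps_def)
  then show ?thesis
    unfolding Kz_def GG_def using T0_io by (simp add: vec_eq_iff split_paired_all)
qed

lemma GG_GI: "GG ** GI = mat 1"
proof -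
  have big: "\<forall>s z a b :: 3. (\<Sum>p\<in>UNIV. \<Sum>q\<in>UNIV. ((if p = q \<and> s = z then 1 else 0) - (if p = z \<and> s = q then 1 else 0))
      * ((if p = q \<and> a = b then 1/2 else 0) - (if q = a \<and> p = b then 1 else 0)))
     = (if (s,z) = (a,b) then 1 else (0::complex))"
    by (simp only: forall_3 sum_3) simp
  have "(GG ** GI) $ (s,z) $ (a,b) = mat 1 $ (s,z) $ (a,b)" for s z a b
  proof -
    have "(GG ** GI) $ (s,z) $ (a,b) = (\<Sum>k\<in>UNIV\<times>UNIV. GG $ (s,z) $ k * GI $ k $ (a,b))"
      by (simp add: matrix_matrix_mult_def UNIV_Times_UNIV)
    also have "\<dots> = (\<Sum>p\<in>UNIV. \<Sum>q\<in>UNIV. GG $ (s,z) $ (p,q) * GI $ (p,q) $ (a,b))"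
      by (simp add: sum.cartesian_product split_def)
    also have "\<dots> = (\<Sum>p\<in>UNIV. \<Sum>q\<in>UNIV. ((if p = q \<and> s = z then 1 else 0) - (if p = z \<and> s = q then 1 else 0))
      * ((if p = q \<and> a = b then 1/2 else 0) - (if q = a \<and> p = b then 1 else 0)))"
      by (simp add: GG_def GI_def)
    also have "\<dots> = mat 1 $ (s,z) $ (a,b)"
      using big by (simp add: mat_def)
    finally show ?thesis .
  qed
  then show ?thesis by (simp add: vec_eq_iff split_paired_all)
qed

lemma det_GG: "det (Kz T0) \<noteq> 0"
proof -
  have "det GG * det GI = 1" using GG_GI det_mul[of GG GI] by simp
  then show ?thesis unfolding Kz_T0 by auto
qed


lemma app_lim:
  fixes S :: "nat \<Rightarrow> 'a \<Rightarrow> 'b::topological_space"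
  assumes "S \<longlonglongrightarrow> T"
  shows "(\<lambda>n. S n x) \<longlonglongrightarrow> T x"
  using continuous_on_tendsto_compose[OF continuous_on_product_coordinates[of x] assms] by simp

lemma lim_det:
  assumes "S \<longlonglongrightarrow> T"
  shows "(\<lambda>n. det (Kz (S n))) \<longlonglongrightarrow> det (Kz T)"
proof -
  have pt: "(\<lambda>n. S n x y z) \<longlonglongrightarrow> T x y z" for x y z
    using app_lim[OF app_lim[OF app_lim[OF assms], of x], of y, of z] .
  show ?thesis
    unfolding det_def Kz_def vec_lambda_beta
    by (intro tendsto_sum tendsto_mult tendsto_const tendsto_prod pt)
qed

lemma no_low: "\<not> (\<exists>S :: nat \<Rightarrow> ten. (\<forall>n. tensor_rank (S n) \<le> 4) \<and> S \<longlonglongrightarrow> T0)"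
proof
  assume "\<exists>S :: nat \<Rightarrow> ten. (\<forall>n. tensor_rank (S n) \<le> 4) \<and> S \<longlonglongrightarrow> T0"
  then obtain S :: "nat \<Rightarrow> ten" where S: "\<And>n. tensor_rank (S n) \<le> 4" "S \<longlonglongrightarrow> T0" by blast
  have "(\<lambda>n. det (Kz (S n))) \<longlonglongrightarrow> det (Kz T0)" by (rule lim_det[OF S(2)])
  moreover have "(\<lambda>n. det (Kz (S n))) = (\<lambda>n. 0)" using low_det[OF S(1)] by simp
  ultimately have "det (Kz T0) = 0" using LIMSEQ_unique tendsto_const by metis
  with det_GG show False by simp
qed

theorem mainTheorem18:
  shows "tensor_rank (struct_tensor commutator) \<in> {5, 6} \<and>
         border_rank (struct_tensor commutator) = 5"
proof -
  have r6: "tensor_rank T0 \<le> 6" by (rule rank6)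
  have r5: "\<not> tensor_rank T0 \<le> 4"
  proof
    assume "tensor_rank T0 \<le> 4"
    then have "det (Kz T0) = 0" by (rule low_det)
    with det_GG show False by simp
  qed
  have br: "border_rank T0 = 5"
    unfolding border_rank_def
  proof (rule Least_equality)
    show "\<exists>S :: nat \<Rightarrow> ten. (\<forall>n. tensor_rank (S n) \<le> 5) \<and> S \<longlonglongrightarrow> T0"
      by (intro exI[of _ SS] conjI allI SS_rank SS_lim)
  next
    fix y
    assume "\<exists>S :: nat \<Rightarrow> ten. (\<forall>n. tensor_rank (S n) \<le> y) \<and> S \<longlonglongrightarrow> T0"
    then obtain S :: "nat \<Rightarrow> ten" where S: "\<And>n. tensor_rank (S n) \<le> y" "S \<longlonglongrightarrow> T0" by blast
    show "5 \<le> y"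
    proof (rule ccontr)
      assume "\<not> 5 \<le> y"
      then have "y \<le> 4" by simp
      then have "\<forall>n. tensor_rank (S n) \<le> 4" using S(1) by (meson order_trans)
      then have "\<exists>S :: nat \<Rightarrow> ten. (\<forall>n. tensor_rank (S n) \<le> 4) \<and> S \<longlonglongrightarrow> T0"
        using S(2) by blast
      with no_low show False by (rule notE)
    qed
  qed
  have "tensor_rank T0 = 5 \<or> tensor_rank T0 = 6" using r6 r5 by linarith
  then show ?thesis using br unfolding T0_def by simp
qed

end
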